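(* Let $G=(V,E)$ be a graph, $c\ge1$, $\epsilon\in[0,1/3)$, let $\kappa(G)=(V,\kappa(E))$ be an $(\epsilon,c)$-kernel of $G$ with tight nodes $\kappa_T(V)$, and let $M$ be a maximal matching in $\kappa(G)$. Let $F_T$ be the set of tight nodes that are not matched in $M$. Then $|F_T|\le(2+6\epsilon)|M|$.
   Context: Let $\mathcal N_v$ denote the set of neighbors of $v$ in $G$. A subgraph $\kappa(G)=(V,\kappa(E))$ with $\kappa(E)\subseteq E$ is given, together with a partition of $V$ into tight nodes $\kappa_T(V)$ and slack nodes $\kappa_S(V)$. For $v\in V$ let $\kappa(\mathcal N_v)=\{u\in\mathcal N_v:(u,v)\in\kappa(E)\}$ (the friends of $v$). For $c\ge1$ and $\epsilon\in[0,1/3)$, $\kappa(G)$ is an $(\epsilon,c)$-kernel of $G$ (w.r.t. this partition) iff: (i) $|\kappa(\mathcal N_v)|\le(1+\epsilon)c$ for all $v\in V$; (ii) $|\kappa(\mathcal N_v)|\ge(1-\epsilon)c$ for all $v\in\kappa_T(V)$; (iii) for all $u,v\in\kappa_S(V)$, if $(u,v)\in E$ then $(u,v)\in\kappa(E)$. *)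

theory Defs
  imports Complex_Main
begin

definition simple_graph :: "'a set \<Rightarrow> 'a set set \<Rightarrow> bool" where
  "simple_graph V E \<longleftrightarrow> finite V \<and>
     (\<forall>e\<in>E. \<exists>u v. e = {u, v} \<and> u \<noteq> v \<and> u \<in> V \<and> v \<in> V)"

definition nbrs :: "'a set set \<Rightarrow> 'a \<Rightarrow> 'a set" where
  "nbrs E v = {u. {u, v} \<in> E}"

text \<open>(eps,c)-kernel (V, KE) of G = (V, E) w.r.t. the partition of V into tight nodes T
  and slack nodes S.\<close>
definition is_kernel :: "'a set \<Rightarrow> 'a set set \<Rightarrow> 'a set set \<Rightarrow> 'a set \<Rightarrow> 'a set \<Rightarrow> real \<Rightarrow> real \<Rightarrow> bool" where
  "is_kernel V E KE T S eps c \<longleftrightarrow>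
     KE \<subseteq> E \<and> T \<union> S = V \<and> T \<inter> S = {} \<and>
     (\<forall>v\<in>V. real (card (nbrs KE v)) \<le> (1 + eps) * c) \<and>
     (\<forall>v\<in>T. real (card (nbrs KE v)) \<ge> (1 - eps) * c) \<and>
     (\<forall>u\<in>S. \<forall>v\<in>S. {u, v} \<in> E \<longrightarrow> {u, v} \<in> KE)"

definition is_matching :: "'a set set \<Rightarrow> 'a set set \<Rightarrow> bool" where
  "is_matching E M \<longleftrightarrow> M \<subseteq> E \<and> (\<forall>e1\<in>M. \<forall>e2\<in>M. e1 \<noteq> e2 \<longrightarrow> e1 \<inter> e2 = {})"

definition is_maximal_matching :: "'a set set \<Rightarrow> 'a set set \<Rightarrow> bool" where
  "is_maximal_matching E M \<longleftrightarrow> is_matching E M \<and>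
     (\<forall>M'. is_matching E M' \<and> M \<subseteq> M' \<longrightarrow> M' = M)"

end

theory Submission
  imports Defs
begin

theorem lemma3p12:
  fixes V T S :: "'a set" and E KE M :: "'a set set" and eps c :: real
  assumes "simple_graph V E"
    and "c \<ge> 1" and "0 \<le> eps" and "eps < 1/3"
    and "is_kernel V E KE T S eps c"
    and "is_maximal_matching KE M"
  shows "real (card {v \<in> T. v \<notin> \<Union>M}) \<le> (2 + 6 * eps) * real (card M)"
proof -
  define F where "F = {v \<in> T. v \<notin> \<Union>M}"
  define W where "W = \<Union>M"
  have finV: "finite V" and Eok: "\<forall>e\<in>E. \<exists>u v. e = {u, v} \<and> u \<noteq> v \<and> u \<in> V \<and> v \<in> V"
    using assms(1) unfolding simple_graph_def by auto
  have K: "KE \<subseteq> E" "T \<union> S = V" "\<forall>v\<in>V. real (card (nbrs KE v)) \<le> (1 + eps) * c"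
    "\<forall>v\<in>T. real (card (nbrs KE v)) \<ge> (1 - eps) * c"
    using assms(5) unfolding is_kernel_def by auto
  have mat: "M \<subseteq> KE" "\<forall>e1\<in>M. \<forall>e2\<in>M. e1 \<noteq> e2 \<longrightarrow> e1 \<inter> e2 = {}"
    and maxm: "\<And>M'. is_matching KE M' \<Longrightarrow> M \<subseteq> M' \<Longrightarrow> M' = M"
    using assms(6) unfolding is_maximal_matching_def is_matching_def by auto
  have EPow: "E \<subseteq> Pow V"
  proof
    fix e assume "e \<in> E"
    then obtain u v where "e = {u, v}" "u \<in> V" "v \<in> V" using Eok by blast
    thus "e \<in> Pow V" by simp
  qed
  have finE: "finite E" using finite_subset[OF EPow] finV by simp
  have finM: "finite M" using finite_subset[OF _ finE] mat(1) K(1) by blast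
  have Mcard: "\<forall>e\<in>M. card e \<le> 2"
  proof
    fix e assume "e \<in> M"
    hence "e \<in> E" using mat(1) K(1) by blast
    then obtain u v where "e = {u, v}" using Eok by meson
    thus "card e \<le> 2" by (simp add: card_insert_if)
  qed
  have WV: "W \<subseteq> V" using EPow mat(1) K(1) unfolding W_def by blast
  have finW: "finite W" using finite_subset[OF WV finV] .
  have Wcard: "card W \<le> 2 * card M"
  proof -
    have "card W \<le> (\<Sum>e\<in>M. card e)" unfolding W_def by (rule card_Union_le_sum_card)
    also have "\<dots> \<le> (\<Sum>e\<in>M. 2)" using Mcard by (intro sum_mono) auto
    finally show ?thesis by simp
  qed
  have FV: "F \<subseteq> V" using K(2) unfolding F_def by blast
  have finF: "finite F" using finite_subset[OF FV finV] .
  have nbV: "\<And>v. nbrs KE v \<subseteq> V" unfolding nbrs_def using K(1) EPow by blast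
  have finN: "\<And>v. finite (nbrs KE v)" using finite_subset[OF nbV finV] .
  have NW: "nbrs KE v \<subseteq> W" if vF: "v \<in> F" for v
  proof
    fix u assume u: "u \<in> nbrs KE v"
    hence uv: "{u, v} \<in> KE" by (simp add: nbrs_def)
    have vW: "v \<notin> W" using vF unfolding F_def W_def by auto
    show "u \<in> W"
    proof (rule ccontr)
      assume uW: "u \<notin> W"
      have "is_matching KE (insert {u, v} M)"
        unfolding is_matching_def using uv mat uW vW unfolding W_def by blast
      hence "insert {u, v} M = M" using maxm by blast
      hence "{u,v} \<in> M" by blast
      thus False using vW unfolding W_def by blast
    qed
  qed
  have "(\<Sum>v\<in>F. real (card (nbrs KE v))) = (\<Sum>v\<in>F. \<Sum>u\<in>W. if {u,v} \<in> KE then 1 else 0)"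
  proof (rule sum.cong[OF refl])
    fix v assume "v \<in> F"
    hence "nbrs KE v = {u\<in>W. {u,v} \<in> KE}" using NW unfolding nbrs_def by blast
    thus "real (card (nbrs KE v)) = (\<Sum>u\<in>W. if {u,v} \<in> KE then 1 else 0)"
      using finW by (simp add: sum.If_cases Int_def)
  qed
  also have "\<dots> = (\<Sum>u\<in>W. \<Sum>v\<in>F. if {u,v} \<in> KE then 1 else 0)" by (rule sum.swap)
  also have "\<dots> \<le> (\<Sum>u\<in>W. real (card (nbrs KE u)))"
  proof (rule sum_mono)
    fix u assume "u \<in> W"
    have "(\<Sum>v\<in>F. if {u,v} \<in> KE then 1 else 0 :: real) = real (card {v\<in>F. {u,v} \<in> KE})"
      using finF by (simp add: sum.If_cases Int_def)
    also have "\<dots> \<le> real (card (nbrs KE u))"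
      by (intro of_nat_mono card_mono[OF finN]) (auto simp: nbrs_def insert_commute)
    finally show "(\<Sum>v\<in>F. if {u,v} \<in> KE then 1 else 0 :: real) \<le> real (card (nbrs KE u))" .
  qed
  also have "\<dots> \<le> (\<Sum>u\<in>W. (1 + eps) * c)" using K(3) WV by (intro sum_mono) auto
  also have "\<dots> = real (card W) * ((1 + eps) * c)" by simp
  finally have up: "(\<Sum>v\<in>F. real (card (nbrs KE v))) \<le> real (card W) * ((1 + eps) * c)" .
  have "real (card F) * ((1 - eps) * c) = (\<Sum>v\<in>F. (1 - eps) * c)" by simp
  also have "\<dots> \<le> (\<Sum>v\<in>F. real (card (nbrs KE v)))"
    using K(4) unfolding F_def by (intro sum_mono) auto
  finally have "real (card F) * ((1 - eps) * c) \<le> real (2 * card M) * ((1 + eps) * c)"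
    using up Wcard assms(2,3)
    by (smt (verit, best) mult_right_mono of_nat_mono zero_le_mult_iff)
  hence "(real (card F) * (1 - eps)) * c \<le> (real (2 * card M) * (1 + eps)) * c"
    by (simp add: mult.assoc)
  hence h: "real (card F) * (1 - eps) \<le> 2 * real (card M) * (1 + eps)"
    using assms(2) by simp
  have d: "0 \<le> 2*eps*(1 - 3*eps)" using assms(3,4) by simp
  have "2 * (1 + eps) \<le> (2 + 6*eps) * (1 - eps)" using d by (simp add: algebra_simps)
  hence "2 * real (card M) * (1 + eps) \<le> ((2 + 6*eps) * real (card M)) * (1 - eps)"
    using mult_right_mono[of "2 * (1 + eps)" "(2 + 6*eps) * (1 - eps)" "real (card M)"]
    by (simp add: algebra_simps)
  with h have "real (card F) * (1 - eps) \<le> ((2 + 6*eps) * real (card M)) * (1 - eps)" by linarith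
  hence "real (card F) \<le> (2 + 6*eps) * real (card M)" using assms(4)
    by (simp add: mult_le_cancel_right)
  thus ?thesis unfolding F_def .
qed

end
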